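(* Let $(E\to M,\rho,\langle\cdot,\cdot\rangle,[\cdot,\cdot])$ be a Courant algebroid, $\mathcal{G}$ a generalized metric and $\operatorname{div}$ a divergence operator on $E$, and let $D$ be a metric generalized connection with divergence $\operatorname{div}$ and pure-type torsion, with total generalized Ricci curvature $\mathrm{Ric}$. Then $\mathrm{Ric}(a,\mathcal{G}b)=-\mathrm{Ric}(\mathcal{G}a,b)$ for all $a,b\in\Gamma(E)$. In particular, $\mathrm{Ric}'_{\mathrm{GF}}$ is skew-symmetric if and only if $\mathrm{Ric}$ is symmetric.
   Context: A Courant algebroid $(E\to M,\rho,\langle\cdot,\cdot\rangle,[\cdot,\cdot])$: vector bundle $E$ with nondegenerate symmetric form, anchor $\rho:E\to TM$ and bracket on $\Gamma(E)$ with $[a,[b,c]]=[[a,b],c]+[b,[a,c]]$, $\mathcal{L}_{\rho a}\langle b,c\rangle=\langle[a,b],c\rangle+\langle b,[a,c]\rangle$, $2[a,a]=\rho^*d\langle a,a\rangle$. A generalized connection is a linear $D:\Gamma(E)\to\Gamma(E^*\otimes E)$ with $D(fa)=fDa+\rho^*df\otimes a$ and $\rho^*d\langle a,b\rangle=\langle Da,b\rangle+\langle a,Db\rangle$; $D_ba:=(Da)(b)$, $(Da)^*$ is the adjoint of $b\mapsto D_ba$. Naive curvature $\mathcal{R}_0(a,b)c:=D_aD_bc-D_bD_ac-D_{[a,b]}c$. A generalized metric is a self-adjoint $\mathcal{G}\in\operatorname{End}E$ with $\mathcal{G}^2=1$; $V_\pm=\ker(\mathcal{G}\mp1)$, $x_\pm:=\tfrac12(1\pm\mathcal{G})x$.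 $D$ is metric if it preserves $\Gamma(V_\pm)$. A divergence operator is linear $\operatorname{div}:\Gamma(E)\to C^\infty(M)$ with $\operatorname{div}(fa)=f\operatorname{div}a+\mathcal{L}_{\rho a}f$; $D$ has divergence $\operatorname{div}$ if $\operatorname{div}a=\operatorname{tr}(Da)$. Torsion $T(a,b):=D_ab-D_ba-[a,b]+(Da)^*b\in\Gamma(\wedge^3E^* )$ is of pure type if $T\in\Gamma(\wedge^3V_+\oplus\wedge^3V_-)$. Total curvature $\mathcal{R}(a,b):=\mathcal{R}_0(a_+,b_-)+\mathcal{R}_0(a_-,b_+)$; total generalized Ricci curvature $\mathrm{Ric}(a,b):=\operatorname{tr}(c\mapsto\mathcal{R}(c,a)b)$. $\mathrm{Ric}^\pm_{\mathrm{GF}}(a_\mp,b_\pm)$ is the trace of $V_\pm\to V_\pm$, $c_\pm\mapsto\mathcal{R}_0(c_\pm,a_\mp)b_\pm$, and $\mathrm{Ric}'_{\mathrm{GF}}(a,b):=\mathrm{Ric}^+_{\mathrm{GF}}(a_-,b_+)-\mathrm{Ric}^-_{\mathrm{GF}}(a_+,b_-)$. *)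

theory Defs
  imports Complex_Main
begin

text \<open>Algebraic (Serre--Swan) model of a Courant algebroid.
  'r plays the role of the function ring C^inf(M) (a commutative real algebra),
  'e the role of the space of sections Gamma(E) (a real vector space which is an 'r-module
  via sm).  anchor a is the vector field rho(a), acting as a derivation on 'r.
  ip is the pairing, br the bracket.\<close>

definition is_frame ::
  "('r::comm_ring_1 \<Rightarrow> 'e::ab_group_add \<Rightarrow> 'e) \<Rightarrow> ('e \<Rightarrow> 'e \<Rightarrow> 'r)
   \<Rightarrow> nat \<Rightarrow> (nat \<Rightarrow> 'e) \<Rightarrow> (nat \<Rightarrow> 'e) \<Rightarrow> bool" where
  "is_frame sm ip n e f \<longleftrightarrow> (\<forall>x. x = (\<Sum>i<n. sm (ip (f i) x) (e i)))"

text \<open>Trace of an endomorphism of Gamma(E), computed with any finite (generating) frame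
  and its dual frame with respect to the pairing.\<close>
definition ca_trace ::
  "('r::comm_ring_1 \<Rightarrow> 'e::ab_group_add \<Rightarrow> 'e) \<Rightarrow> ('e \<Rightarrow> 'e \<Rightarrow> 'r) \<Rightarrow> ('e \<Rightarrow> 'e) \<Rightarrow> 'r" where
  "ca_trace sm ip \<phi> =
     (THE t. \<forall>n e f. is_frame sm ip n e f \<longrightarrow> t = (\<Sum>i<n. ip (f i) (\<phi> (e i))))"

definition is_derivation :: "('r::{comm_ring_1,real_algebra_1} \<Rightarrow> 'r) \<Rightarrow> bool" where
  "is_derivation X \<longleftrightarrow>
     (\<forall>g h. X (g + h) = X g + X h) \<and> (\<forall>c g. X (c *\<^sub>R g) = c *\<^sub>R X g) \<and>
     (\<forall>g h. X (g * h) = g * X h + h * X g)"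

text \<open>rho^* d f, identified with a section via the pairing: <rho^* df, c> = rho(c) f.\<close>
definition rho_d :: "('e \<Rightarrow> 'e \<Rightarrow> 'r) \<Rightarrow> ('e \<Rightarrow> 'r \<Rightarrow> 'r) \<Rightarrow> 'r \<Rightarrow> 'e" where
  "rho_d ip anchor f = (THE x. \<forall>c. ip x c = anchor c f)"

definition courant_algebroid ::
  "('r::{comm_ring_1,real_algebra_1} \<Rightarrow> 'e::real_vector \<Rightarrow> 'e) \<Rightarrow> ('e \<Rightarrow> 'e \<Rightarrow> 'r)
   \<Rightarrow> ('e \<Rightarrow> 'r \<Rightarrow> 'r) \<Rightarrow> ('e \<Rightarrow> 'e \<Rightarrow> 'e) \<Rightarrow> bool" where
  "courant_algebroid sm ip anchor br \<longleftrightarrow>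
     \<comment> \<open>Gamma(E) is an 'r-module compatible with its real structure\<close>
     (\<forall>f a b. sm f (a + b) = sm f a + sm f b) \<and>
     (\<forall>f g a. sm (f + g) a = sm f a + sm g a) \<and>
     (\<forall>f g a. sm (f * g) a = sm f (sm g a)) \<and>
     (\<forall>a. sm 1 a = a) \<and>
     (\<forall>c a. sm (of_real c) a = c *\<^sub>R a) \<and>
     \<comment> \<open>finite rank (finitely generated projective, dualised by the pairing)\<close>
     (\<exists>n e f. is_frame sm ip n e f) \<and>
     \<comment> \<open>nondegenerate symmetric 'r-bilinear pairing\<close>
     (\<forall>a b. ip a b = ip b a) \<and>
     (\<forall>a a' b. ip (a + a') b = ip a b + ip a' b) \<and>
     (\<forall>f a b. ip (sm f a) b = f * ip a b) \<and>
     (\<forall>a. (\<forall>b. ip a b = 0) \<longrightarrow> a = 0) \<and>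
     \<comment> \<open>anchor: bundle map to vector fields (derivations)\<close>
     (\<forall>a. is_derivation (anchor a)) \<and>
     (\<forall>a b g. anchor (a + b) g = anchor a g + anchor b g) \<and>
     (\<forall>f a g. anchor (sm f a) g = f * anchor a g) \<and>
     \<comment> \<open>real-bilinear bracket\<close>
     (\<forall>a a' b. br (a + a') b = br a b + br a' b) \<and>
     (\<forall>a b b'. br a (b + b') = br a b + br a b') \<and>
     (\<forall>c a b. br (c *\<^sub>R a) b = c *\<^sub>R br a b) \<and>
     (\<forall>c a b. br a (c *\<^sub>R b) = c *\<^sub>R br a b) \<and>
     \<comment> \<open>Courant algebroid axioms\<close>
     (\<forall>a b c. br a (br b c) = br (br a b) c + br b (br a c)) \<and>
     (\<forall>a b c. anchor a (ip b c) = ip (br a b) c + ip b (br a c)) \<and>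
     (\<forall>a. 2 *\<^sub>R br a a = rho_d ip anchor (ip a a))"

definition generalized_metric ::
  "('r::comm_ring_1 \<Rightarrow> 'e::ab_group_add \<Rightarrow> 'e) \<Rightarrow> ('e \<Rightarrow> 'e \<Rightarrow> 'r) \<Rightarrow> ('e \<Rightarrow> 'e) \<Rightarrow> bool" where
  "generalized_metric sm ip G \<longleftrightarrow>
     (\<forall>a b. G (a + b) = G a + G b) \<and> (\<forall>f a. G (sm f a) = sm f (G a)) \<and>
     (\<forall>a b. ip (G a) b = ip a (G b)) \<and> (\<forall>a. G (G a) = a)"

definition gplus :: "('e::real_vector \<Rightarrow> 'e) \<Rightarrow> 'e \<Rightarrow> 'e" where
  "gplus G a = (1/2) *\<^sub>R (a + G a)"

definition gminus :: "('e::real_vector \<Rightarrow> 'e) \<Rightarrow> 'e \<Rightarrow> 'e" where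
  "gminus G a = (1/2) *\<^sub>R (a - G a)"

text \<open>D b a stands for D_b a.\<close>
definition generalized_connection ::
  "('r::{comm_ring_1,real_algebra_1} \<Rightarrow> 'e::real_vector \<Rightarrow> 'e) \<Rightarrow> ('e \<Rightarrow> 'e \<Rightarrow> 'r)
   \<Rightarrow> ('e \<Rightarrow> 'r \<Rightarrow> 'r) \<Rightarrow> ('e \<Rightarrow> 'e \<Rightarrow> 'e) \<Rightarrow> bool" where
  "generalized_connection sm ip anchor D \<longleftrightarrow>
     \<comment> \<open>Da is a section of E^* (x) E\<close>
     (\<forall>a b b'. D (b + b') a = D b a + D b' a) \<and>
     (\<forall>f a b. D (sm f b) a = sm f (D b a)) \<and>
     \<comment> \<open>D is real-linear\<close>
     (\<forall>a a' b. D b (a + a') = D b a + D b a') \<and>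
     (\<forall>c a b. D b (c *\<^sub>R a) = c *\<^sub>R D b a) \<and>
     \<comment> \<open>D(fa) = f Da + rho^* df (x) a\<close>
     (\<forall>f a b. D b (sm f a) = sm f (D b a) + sm (anchor b f) a) \<and>
     \<comment> \<open>rho^* d<a,b> = <Da,b> + <a,Db>\<close>
     (\<forall>a b c. anchor c (ip a b) = ip (D c a) b + ip a (D c b))"

definition metric_connection :: "('e::real_vector \<Rightarrow> 'e) \<Rightarrow> ('e \<Rightarrow> 'e \<Rightarrow> 'e) \<Rightarrow> bool" where
  "metric_connection G D \<longleftrightarrow>
     (\<forall>a b. G a = a \<longrightarrow> G (D b a) = D b a) \<and>
     (\<forall>a b. G a = - a \<longrightarrow> G (D b a) = - D b a)"

definition divergence_operator ::
  "('r::{comm_ring_1,real_algebra_1} \<Rightarrow> 'e::real_vector \<Rightarrow> 'e) \<Rightarrow> ('e \<Rightarrow> 'r \<Rightarrow> 'r)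
   \<Rightarrow> ('e \<Rightarrow> 'r) \<Rightarrow> bool" where
  "divergence_operator sm anchor dv \<longleftrightarrow>
     (\<forall>a b. dv (a + b) = dv a + dv b) \<and> (\<forall>c a. dv (c *\<^sub>R a) = c *\<^sub>R dv a) \<and>
     (\<forall>f a. dv (sm f a) = f * dv a + anchor a f)"

definition has_divergence ::
  "('r::comm_ring_1 \<Rightarrow> 'e::ab_group_add \<Rightarrow> 'e) \<Rightarrow> ('e \<Rightarrow> 'e \<Rightarrow> 'r) \<Rightarrow> ('e \<Rightarrow> 'e \<Rightarrow> 'e)
   \<Rightarrow> ('e \<Rightarrow> 'r) \<Rightarrow> bool" where
  "has_divergence sm ip D dv \<longleftrightarrow> (\<forall>a. dv a = ca_trace sm ip (\<lambda>b. D b a))"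

definition adjoint :: "('e \<Rightarrow> 'e \<Rightarrow> 'r) \<Rightarrow> ('e \<Rightarrow> 'e) \<Rightarrow> 'e \<Rightarrow> 'e" where
  "adjoint ip \<phi> b = (THE x. \<forall>c. ip x c = ip b (\<phi> c))"

definition torsion ::
  "('e::ab_group_add \<Rightarrow> 'e \<Rightarrow> 'r) \<Rightarrow> ('e \<Rightarrow> 'e \<Rightarrow> 'e) \<Rightarrow> ('e \<Rightarrow> 'e \<Rightarrow> 'e) \<Rightarrow> 'e \<Rightarrow> 'e \<Rightarrow> 'e" where
  "torsion ip br D a b = D a b - D b a - br a b + adjoint ip (\<lambda>c. D c a) b"

text \<open>T in Gamma(wedge^3 V+ (+) wedge^3 V-): the 3-form <T(a,b),c> vanishes on mixed types.\<close>
definition pure_type_torsion ::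
  "('e::real_vector \<Rightarrow> 'e \<Rightarrow> 'r::comm_ring_1) \<Rightarrow> ('e \<Rightarrow> 'e \<Rightarrow> 'e) \<Rightarrow> ('e \<Rightarrow> 'e)
   \<Rightarrow> ('e \<Rightarrow> 'e \<Rightarrow> 'e) \<Rightarrow> bool" where
  "pure_type_torsion ip br G D \<longleftrightarrow>
     (\<forall>a b c. ip (torsion ip br D a b) c =
        ip (torsion ip br D (gplus G a) (gplus G b)) (gplus G c) +
        ip (torsion ip br D (gminus G a) (gminus G b)) (gminus G c))"

definition naive_curv :: "('e::ab_group_add \<Rightarrow> 'e \<Rightarrow> 'e) \<Rightarrow> ('e \<Rightarrow> 'e \<Rightarrow> 'e) \<Rightarrow> 'e \<Rightarrow> 'e \<Rightarrow> 'e \<Rightarrow> 'e" where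
  "naive_curv br D a b c = D a (D b c) - D b (D a c) - D (br a b) c"

definition total_curv ::
  "('e::real_vector \<Rightarrow> 'e \<Rightarrow> 'e) \<Rightarrow> ('e \<Rightarrow> 'e) \<Rightarrow> ('e \<Rightarrow> 'e \<Rightarrow> 'e) \<Rightarrow> 'e \<Rightarrow> 'e \<Rightarrow> 'e \<Rightarrow> 'e" where
  "total_curv br G D a b c =
     naive_curv br D (gplus G a) (gminus G b) c + naive_curv br D (gminus G a) (gplus G b) c"

definition total_ric ::
  "('r::comm_ring_1 \<Rightarrow> 'e::real_vector \<Rightarrow> 'e) \<Rightarrow> ('e \<Rightarrow> 'e \<Rightarrow> 'r) \<Rightarrow> ('e \<Rightarrow> 'e \<Rightarrow> 'e)
   \<Rightarrow> ('e \<Rightarrow> 'e) \<Rightarrow> ('e \<Rightarrow> 'e \<Rightarrow> 'e) \<Rightarrow> 'e \<Rightarrow> 'e \<Rightarrow> 'r" where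
  "total_ric sm ip br G D a b = ca_trace sm ip (\<lambda>c. total_curv br G D c a b)"

text \<open>Trace of an endomorphism of Gamma(V+) (resp. Gamma(V-)), computed as the trace of its
  extension by zero on V-, i.e. of P+ o phi o P+.\<close>
definition trace_plus ::
  "('r::comm_ring_1 \<Rightarrow> 'e::real_vector \<Rightarrow> 'e) \<Rightarrow> ('e \<Rightarrow> 'e \<Rightarrow> 'r) \<Rightarrow> ('e \<Rightarrow> 'e) \<Rightarrow> ('e \<Rightarrow> 'e) \<Rightarrow> 'r" where
  "trace_plus sm ip G \<phi> = ca_trace sm ip (\<lambda>c. gplus G (\<phi> (gplus G c)))"

definition trace_minus ::
  "('r::comm_ring_1 \<Rightarrow> 'e::real_vector \<Rightarrow> 'e) \<Rightarrow> ('e \<Rightarrow> 'e \<Rightarrow> 'r) \<Rightarrow> ('e \<Rightarrow> 'e) \<Rightarrow> ('e \<Rightarrow> 'e) \<Rightarrow> 'r" where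
  "trace_minus sm ip G \<phi> = ca_trace sm ip (\<lambda>c. gminus G (\<phi> (gminus G c)))"

text \<open>ric_gf_plus a b = Ric^+_GF(a_-, b_+), ric_gf_minus a b = Ric^-_GF(a_+, b_-).\<close>
definition ric_gf_plus ::
  "('r::comm_ring_1 \<Rightarrow> 'e::real_vector \<Rightarrow> 'e) \<Rightarrow> ('e \<Rightarrow> 'e \<Rightarrow> 'r) \<Rightarrow> ('e \<Rightarrow> 'e \<Rightarrow> 'e)
   \<Rightarrow> ('e \<Rightarrow> 'e) \<Rightarrow> ('e \<Rightarrow> 'e \<Rightarrow> 'e) \<Rightarrow> 'e \<Rightarrow> 'e \<Rightarrow> 'r" where
  "ric_gf_plus sm ip br G D a b =
     trace_plus sm ip G (\<lambda>c. naive_curv br D c (gminus G a) (gplus G b))"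

definition ric_gf_minus ::
  "('r::comm_ring_1 \<Rightarrow> 'e::real_vector \<Rightarrow> 'e) \<Rightarrow> ('e \<Rightarrow> 'e \<Rightarrow> 'r) \<Rightarrow> ('e \<Rightarrow> 'e \<Rightarrow> 'e)
   \<Rightarrow> ('e \<Rightarrow> 'e) \<Rightarrow> ('e \<Rightarrow> 'e \<Rightarrow> 'e) \<Rightarrow> 'e \<Rightarrow> 'e \<Rightarrow> 'r" where
  "ric_gf_minus sm ip br G D a b =
     trace_minus sm ip G (\<lambda>c. naive_curv br D c (gplus G a) (gminus G b))"

definition ric_gf' ::
  "('r::comm_ring_1 \<Rightarrow> 'e::real_vector \<Rightarrow> 'e) \<Rightarrow> ('e \<Rightarrow> 'e \<Rightarrow> 'r) \<Rightarrow> ('e \<Rightarrow> 'e \<Rightarrow> 'e)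
   \<Rightarrow> ('e \<Rightarrow> 'e) \<Rightarrow> ('e \<Rightarrow> 'e \<Rightarrow> 'e) \<Rightarrow> 'e \<Rightarrow> 'e \<Rightarrow> 'r" where
  "ric_gf' sm ip br G D a b = ric_gf_plus sm ip br G D a b - ric_gf_minus sm ip br G D a b"

end

theory Submission
  imports Defs
begin


definition lin :: "('r::comm_ring_1 \<Rightarrow> 'e::ab_group_add \<Rightarrow> 'e) \<Rightarrow> ('e \<Rightarrow> 'e) \<Rightarrow> bool" where
  "lin sm \<phi> \<longleftrightarrow> (\<forall>x y. \<phi> (x + y) = \<phi> x + \<phi> y) \<and> (\<forall>g x. \<phi> (sm g x) = sm g (\<phi> x))"

locale CA =
  fixes sm :: "'r::{comm_ring_1,real_algebra_1} \<Rightarrow> 'e::real_vector \<Rightarrow> 'e"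
    and ip :: "'e \<Rightarrow> 'e \<Rightarrow> 'r"
    and anchor :: "'e \<Rightarrow> 'r \<Rightarrow> 'r"
    and br :: "'e \<Rightarrow> 'e \<Rightarrow> 'e"
    and G :: "'e \<Rightarrow> 'e"
    and D :: "'e \<Rightarrow> 'e \<Rightarrow> 'e"
  assumes ca: "courant_algebroid sm ip anchor br"
    and gm: "generalized_metric sm ip G"
    and gc: "generalized_connection sm ip anchor D"
    and mc: "metric_connection G D"
begin

lemma sm_add: "sm f (a + b) = sm f a + sm f b" using conjunct1[OF ca[unfolded courant_algebroid_def]] by blast
lemma sm_addf: "sm (f + g) a = sm f a + sm g a" using conjunct1[OF conjunct2[OF ca[unfolded courant_algebroid_def]]] by blast
lemma sm_mult: "sm (f * g) a = sm f (sm g a)" using conjunct1[OF conjunct2[OF conjunct2[OF ca[unfolded courant_algebroid_def]]]] by blast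
lemma sm_one: "sm 1 a = a" using conjunct1[OF conjunct2[OF conjunct2[OF conjunct2[OF ca[unfolded courant_algebroid_def]]]]] by blast
lemma sm_real: "sm (of_real c) a = c *\<^sub>R a" using conjunct1[OF conjunct2[OF conjunct2[OF conjunct2[OF conjunct2[OF ca[unfolded courant_algebroid_def]]]]]] by blast
lemma frame_ex: "\<exists>n e f. is_frame sm ip n e f" using conjunct1[OF conjunct2[OF conjunct2[OF conjunct2[OF conjunct2[OF conjunct2[OF ca[unfolded courant_algebroid_def]]]]]]] by blast
lemma ip_sym: "ip a b = ip b a" using conjunct1[OF conjunct2[OF conjunct2[OF conjunct2[OF conjunct2[OF conjunct2[OF conjunct2[OF ca[unfolded courant_algebroid_def]]]]]]]] by blast
lemma ip_add: "ip (a + a') b = ip a b + ip a' b" using conjunct1[OF conjunct2[OF conjunct2[OF conjunct2[OF conjunct2[OF conjunct2[OF conjunct2[OF conjunct2[OF ca[unfolded courant_algebroid_def]]]]]]]]] by blast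
lemma ip_sm: "ip (sm f a) b = f * ip a b" using conjunct1[OF conjunct2[OF conjunct2[OF conjunct2[OF conjunct2[OF conjunct2[OF conjunct2[OF conjunct2[OF conjunct2[OF ca[unfolded courant_algebroid_def]]]]]]]]]] by blast
lemma nondeg: "(\<And>b. ip a b = 0) \<Longrightarrow> a = 0" using conjunct1[OF conjunct2[OF conjunct2[OF conjunct2[OF conjunct2[OF conjunct2[OF conjunct2[OF conjunct2[OF conjunct2[OF conjunct2[OF ca[unfolded courant_algebroid_def]]]]]]]]]]] by blast
lemma anchor_der: "is_derivation (anchor a)" using conjunct1[OF conjunct2[OF conjunct2[OF conjunct2[OF conjunct2[OF conjunct2[OF conjunct2[OF conjunct2[OF conjunct2[OF conjunct2[OF conjunct2[OF ca[unfolded courant_algebroid_def]]]]]]]]]]]] by blast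
lemma anchor_add: "anchor (a + b) g = anchor a g + anchor b g" using conjunct1[OF conjunct2[OF conjunct2[OF conjunct2[OF conjunct2[OF conjunct2[OF conjunct2[OF conjunct2[OF conjunct2[OF conjunct2[OF conjunct2[OF conjunct2[OF ca[unfolded courant_algebroid_def]]]]]]]]]]]]] by blast
lemma anchor_sm: "anchor (sm f a) g = f * anchor a g" using conjunct1[OF conjunct2[OF conjunct2[OF conjunct2[OF conjunct2[OF conjunct2[OF conjunct2[OF conjunct2[OF conjunct2[OF conjunct2[OF conjunct2[OF conjunct2[OF conjunct2[OF ca[unfolded courant_algebroid_def]]]]]]]]]]]]]] by blast
lemma br_add1: "br (a + a') b = br a b + br a' b" using conjunct1[OF conjunct2[OF conjunct2[OF conjunct2[OF conjunct2[OF conjunct2[OF conjunct2[OF conjunct2[OF conjunct2[OF conjunct2[OF conjunct2[OF conjunct2[OF conjunct2[OF conjunct2[OF ca[unfolded courant_algebroid_def]]]]]]]]]]]]]]] by blast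
lemma br_add2: "br a (b + b') = br a b + br a b'" using conjunct1[OF conjunct2[OF conjunct2[OF conjunct2[OF conjunct2[OF conjunct2[OF conjunct2[OF conjunct2[OF conjunct2[OF conjunct2[OF conjunct2[OF conjunct2[OF conjunct2[OF conjunct2[OF conjunct2[OF ca[unfolded courant_algebroid_def]]]]]]]]]]]]]]]] by blast
lemma br_inv: "anchor a (ip b c) = ip (br a b) c + ip b (br a c)" using conjunct1[OF conjunct2[OF conjunct2[OF conjunct2[OF conjunct2[OF conjunct2[OF conjunct2[OF conjunct2[OF conjunct2[OF conjunct2[OF conjunct2[OF conjunct2[OF conjunct2[OF conjunct2[OF conjunct2[OF conjunct2[OF conjunct2[OF conjunct2[OF conjunct2[OF ca[unfolded courant_algebroid_def]]]]]]]]]]]]]]]]]]]] by blast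
lemma br_sym: "2 *\<^sub>R br a a = rho_d ip anchor (ip a a)" using conjunct2[OF conjunct2[OF conjunct2[OF conjunct2[OF conjunct2[OF conjunct2[OF conjunct2[OF conjunct2[OF conjunct2[OF conjunct2[OF conjunct2[OF conjunct2[OF conjunct2[OF conjunct2[OF conjunct2[OF conjunct2[OF conjunct2[OF conjunct2[OF conjunct2[OF ca[unfolded courant_algebroid_def]]]]]]]]]]]]]]]]]]]] by blast

lemma G_add: "G (a + b) = G a + G b" using conjunct1[OF gm[unfolded generalized_metric_def]] by blast
lemma G_sm: "G (sm f a) = sm f (G a)" using conjunct1[OF conjunct2[OF gm[unfolded generalized_metric_def]]] by blast
lemma G_sa: "ip (G a) b = ip a (G b)" using conjunct1[OF conjunct2[OF conjunct2[OF gm[unfolded generalized_metric_def]]]] by blast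
lemma G_G: "G (G a) = a" using conjunct2[OF conjunct2[OF conjunct2[OF gm[unfolded generalized_metric_def]]]] by blast

lemma D_add1: "D (b + b') a = D b a + D b' a" using conjunct1[OF gc[unfolded generalized_connection_def]] by blast
lemma D_sm1: "D (sm f b) a = sm f (D b a)" using conjunct1[OF conjunct2[OF gc[unfolded generalized_connection_def]]] by blast
lemma D_add2: "D b (a + a') = D b a + D b a'" using conjunct1[OF conjunct2[OF conjunct2[OF gc[unfolded generalized_connection_def]]]] by blast
lemma D_leib: "D b (sm f a) = sm f (D b a) + sm (anchor b f) a" using conjunct1[OF conjunct2[OF conjunct2[OF conjunct2[OF conjunct2[OF gc[unfolded generalized_connection_def]]]]]] by blast

lemma mc1: "G a = a \<Longrightarrow> G (D b a) = D b a" using mc unfolding metric_connection_def by blast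
lemma mc2: "G a = - a \<Longrightarrow> G (D b a) = - D b a" using mc unfolding metric_connection_def by blast

lemma der_add: "anchor a (g + h) = anchor a g + anchor a h"
  using anchor_der unfolding is_derivation_def by blast
lemma der_mult: "anchor a (g * h) = g * anchor a h + h * anchor a g"
  using anchor_der unfolding is_derivation_def by blast
lemma der_zero: "anchor a 0 = 0"
  using der_add[of a 0 0] by simp

lemma sm_zero[simp]: "sm f 0 = 0" using sm_add[of f 0 0] by simp
lemma sm_0[simp]: "sm 0 a = 0" using sm_addf[of 0 0 a] by simp
lemma sm_minus: "sm f (- a) = - sm f a"
  using sm_add[of f a "-a"] by (simp add: eq_neg_iff_add_eq_0 add.commute)
lemma sm_diff: "sm f (a - b) = sm f a - sm f b"
  using sm_add[of f a "-b"] sm_minus by simp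
lemma sm_scaleR: "sm f (c *\<^sub>R a) = c *\<^sub>R sm f a"
  by (metis sm_real sm_mult mult.commute)
lemma sm_sum: "sm f (sum h A) = (\<Sum>i\<in>A. sm f (h i))"
  by (induct A rule: infinite_finite_induct) (simp_all add: sm_add)
lemma sm_sumf: "sm (sum h A) a = (\<Sum>i\<in>A. sm (h i) a)"
  by (induct A rule: infinite_finite_induct) (simp_all add: sm_addf)

lemma ip_add2: "ip b (a + a') = ip b a + ip b a'" by (metis ip_sym ip_add)
lemma ip_sm2: "ip b (sm f a) = f * ip b a" by (metis ip_sym ip_sm)
lemma ip_zero1[simp]: "ip 0 b = 0" using ip_add[of 0 0 b] by simp
lemma ip_zero2[simp]: "ip b 0 = 0" using ip_add2[of b 0 0] by simp
lemma ip_minus1: "ip (- a) b = - ip a b"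
  using ip_add[of a "-a" b] by (simp add: eq_neg_iff_add_eq_0 add.commute)
lemma ip_minus2: "ip b (- a) = - ip b a" by (metis ip_sym ip_minus1)
lemma ip_diff1: "ip (a - a') b = ip a b - ip a' b" using ip_add[of a "-a'" b] ip_minus1 by simp
lemma ip_diff2: "ip b (a - a') = ip b a - ip b a'" by (metis ip_sym ip_diff1)
lemma ip_scaleR1: "ip (c *\<^sub>R a) b = c *\<^sub>R ip a b"
  by (metis sm_real ip_sm scaleR_conv_of_real)
lemma ip_scaleR2: "ip b (c *\<^sub>R a) = c *\<^sub>R ip b a" by (metis ip_sym ip_scaleR1)
lemma ip_sum1: "ip (sum h A) b = (\<Sum>i\<in>A. ip (h i) b)"
  by (induct A rule: infinite_finite_induct) (simp_all add: ip_add)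
lemma ip_sum2: "ip b (sum h A) = (\<Sum>i\<in>A. ip b (h i))"
  by (induct A rule: infinite_finite_induct) (simp_all add: ip_add2)

lemma eq_by_ip: "(\<And>c. ip x c = ip y c) \<Longrightarrow> x = y"
  using nondeg[of "x - y"] by (simp add: ip_diff1)

lemma anchor_zero1: "anchor 0 g = 0" using anchor_add[of 0 0 g] by simp
lemma anchor_sum: "anchor (sum h A) g = (\<Sum>i\<in>A. anchor (h i) g)"
  by (induct A rule: infinite_finite_induct) (simp_all add: anchor_add anchor_zero1)

lemma rho_d_ex: "\<exists>x. \<forall>c. ip x c = anchor c g"
proof -
  obtain n e f where fr: "is_frame sm ip n e f" using frame_ex by blast
  define x0 where "x0 = (\<Sum>i<n. sm (anchor (e i) g) (f i))"
  have "ip x0 c = anchor c g" for c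
  proof -
    have "ip x0 c = (\<Sum>i<n. anchor (e i) g * ip (f i) c)"
      unfolding x0_def by (simp add: ip_sum1 ip_sm)
    also have "\<dots> = (\<Sum>i<n. anchor (sm (ip (f i) c) (e i)) g)"
      by (simp add: anchor_sm mult.commute)
    also have "\<dots> = anchor (\<Sum>i<n. sm (ip (f i) c) (e i)) g" by (simp add: anchor_sum)
    also have "\<dots> = anchor c g" using fr unfolding is_frame_def by metis
    finally show ?thesis .
  qed
  then show ?thesis by blast
qed

lemma rho_d_ip: "ip (rho_d ip anchor g) c = anchor c g"
proof -
  obtain x where x: "\<forall>c. ip x c = anchor c g" using rho_d_ex by blast
  have "rho_d ip anchor g = x" unfolding rho_d_def
    by (rule the_equality) (use x eq_by_ip in auto)
  then show ?thesis using x by simp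
qed

lemma rho_d_add: "rho_d ip anchor (g + h) = rho_d ip anchor g + rho_d ip anchor h"
  by (rule eq_by_ip) (simp add: rho_d_ip ip_add der_add)

lemma br_zero1: "br 0 b = 0" using br_add1[of 0 0 b] by simp
lemma br_zero2: "br a 0 = 0" using br_add2[of a 0 0] by simp
lemma br_minus2: "br a (- b) = - br a b"
  using br_add2[of a b "-b"] br_zero2 by (simp add: eq_neg_iff_add_eq_0 add.commute)

lemma br_orth: assumes "ip x y = 0" shows "br x y = - br y x"
proof -
  have yx: "ip y x = 0" using assms ip_sym by metis
  have "2 *\<^sub>R br (x + y) (x + y) = rho_d ip anchor (ip (x+y) (x+y))" by (rule br_sym)
  also have "ip (x+y) (x+y) = ip x x + ip y y" using assms yx by (simp add: ip_add ip_add2)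
  also have "rho_d ip anchor (ip x x + ip y y) = 2 *\<^sub>R br x x + 2 *\<^sub>R br y y"
    by (simp add: rho_d_add br_sym)
  finally have "2 *\<^sub>R (br x x + br x y + br y x + br y y) = 2 *\<^sub>R br x x + 2 *\<^sub>R br y y"
    by (simp add: br_add1 br_add2 algebra_simps)
  then have "2 *\<^sub>R (br x y + br y x) = 0" by (simp add: algebra_simps)
  then have "br x y + br y x = 0" by simp
  then show ?thesis by (simp add: eq_neg_iff_add_eq_0 add.commute)
qed

lemma br_leib2: "br a (sm f b) = sm f (br a b) + sm (anchor a f) b"
proof (rule eq_by_ip)
  fix c
  have "ip (br a (sm f b)) c = anchor a (ip (sm f b) c) - ip (sm f b) (br a c)"
    using br_inv[of a "sm f b" c] by (simp add: algebra_simps)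
  also have "\<dots> = f * anchor a (ip b c) + ip b c * anchor a f - f * ip b (br a c)"
    by (simp add: ip_sm der_mult)
  also have "\<dots> = f * ip (br a b) c + anchor a f * ip b c"
    using br_inv[of a b c] by (simp add: algebra_simps)
  finally show "ip (br a (sm f b)) c = ip (sm f (br a b) + sm (anchor a f) b) c"
    by (simp add: ip_add ip_sm)
qed

lemma br_leib1: assumes "ip c a = 0" shows "br (sm f c) a = sm f (br c a) - sm (anchor a f) c"
proof -
  have "ip (sm f c) a = 0" using assms by (simp add: ip_sm)
  then have "br (sm f c) a = - br a (sm f c)" by (rule br_orth)
  also have "\<dots> = - sm f (br a c) - sm (anchor a f) c" by (simp add: br_leib2)
  also have "sm f (br a c) = - sm f (br c a)" using br_orth[OF assms] by (simp add: sm_minus)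
  finally show ?thesis by simp
qed

end


context CA begin

lemma D_zero2[simp]: "D b 0 = 0" using D_add2[of b 0 0] by simp
lemma D_zero1[simp]: "D 0 a = 0" using D_add1[of 0 0 a] by simp
lemma D_minus2: "D b (- a) = - D b a"
  using D_add2[of b a "-a"] by (simp add: eq_neg_iff_add_eq_0 add.commute)
lemma D_minus1: "D (- b) a = - D b a"
  using D_add1[of b "-b" a] by (simp add: eq_neg_iff_add_eq_0 add.commute)
lemma D_diff2: "D b (a - a') = D b a - D b a'" using D_add2[of b a "-a'"] D_minus2 by simp
lemma D_diff1: "D (b - b') a = D b a - D b' a" using D_add1[of b "-b'" a] D_minus1 by simp

lemma G_zero[simp]: "G 0 = 0" using G_add[of 0 0] by simp
lemma G_minus: "G (- a) = - G a"
  using G_add[of a "-a"] by (simp add: eq_neg_iff_add_eq_0 add.commute)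
lemma G_diff: "G (a - b) = G a - G b" using G_add[of a "-b"] G_minus by simp
lemma G_scaleR: "G (c *\<^sub>R a) = c *\<^sub>R G a" by (metis sm_real G_sm)

lemma gplus_add: "gplus G (a + b) = gplus G a + gplus G b"
  unfolding gplus_def by (simp add: G_add algebra_simps)
lemma gminus_add: "gminus G (a + b) = gminus G a + gminus G b"
  unfolding gminus_def by (simp add: G_add algebra_simps)
lemma gplus_sm: "gplus G (sm f a) = sm f (gplus G a)"
  unfolding gplus_def by (simp add: G_sm sm_scaleR sm_add)
lemma gminus_sm: "gminus G (sm f a) = sm f (gminus G a)"
  unfolding gminus_def by (simp add: G_sm sm_scaleR sm_diff)
lemma G_gplus: "G (gplus G a) = gplus G a"
  unfolding gplus_def by (simp add: G_scaleR G_add G_G algebra_simps)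
lemma G_gminus: "G (gminus G a) = - gminus G a"
  unfolding gminus_def by (simp add: G_scaleR G_diff G_G algebra_simps)
lemma gplus_G: "gplus G (G a) = gplus G a"
  unfolding gplus_def by (simp add: G_G algebra_simps)
lemma gminus_G: "gminus G (G a) = - gminus G a"
  unfolding gminus_def by (simp add: G_G algebra_simps)
lemma gplus_fix: "G z = z \<Longrightarrow> gplus G z = z"
  unfolding gplus_def by (simp add: scaleR_2[symmetric])
lemma gminus_fix: "G z = - z \<Longrightarrow> gminus G z = z"
  unfolding gminus_def by (simp add: scaleR_2[symmetric])
lemma gplus_gplus: "gplus G (gplus G a) = gplus G a" by (rule gplus_fix[OF G_gplus])
lemma gminus_gminus: "gminus G (gminus G a) = gminus G a" by (rule gminus_fix[OF G_gminus])
lemma gplus_gminus: "gplus G (gminus G a) = 0"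
  unfolding gplus_def by (simp add: G_gminus)
lemma gminus_gplus: "gminus G (gplus G a) = 0"
  unfolding gminus_def by (simp add: G_gplus)
lemma decomp: "a = gplus G a + gminus G a"
proof -
  have "gplus G a + gminus G a = (1/2) *\<^sub>R ((a + G a) + (a - G a))"
    unfolding gplus_def gminus_def by (simp only: scaleR_right_distrib)
  also have "(a + G a) + (a - G a) = 2 *\<^sub>R a" by (simp add: scaleR_2)
  finally show ?thesis by simp
qed
lemma gplus_minus: "gplus G (- a) = - gplus G a"
  unfolding gplus_def by (simp add: G_minus algebra_simps)
lemma gminus_minus: "gminus G (- a) = - gminus G a"
  unfolding gminus_def by (simp add: G_minus algebra_simps)
lemma ip_gplus: "ip (gplus G x) y = ip x (gplus G y)"
  unfolding gplus_def by (simp add: ip_scaleR1 ip_scaleR2 ip_add ip_add2 G_sa)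
lemma ip_gminus: "ip (gminus G x) y = ip x (gminus G y)"
  unfolding gminus_def by (simp add: ip_scaleR1 ip_scaleR2 ip_diff1 ip_diff2 G_sa)
lemma ip_pm: "ip (gplus G x) (gminus G y) = 0"
  by (simp add: ip_gplus gplus_gminus)
lemma ip_mp: "ip (gminus G x) (gplus G y) = 0"
  by (simp add: ip_gminus gminus_gplus)
lemma ip_neg_space: "G w = - w \<Longrightarrow> ip z w = ip (gminus G z) w"
  by (simp add: ip_gminus gminus_fix)
lemma ip_pos_space: "G w = w \<Longrightarrow> ip z w = ip (gplus G z) w"
  by (simp add: ip_gplus gplus_fix)

abbreviation R0 where "R0 \<equiv> naive_curv br D"

lemma R0_add1: "R0 (c + c') a b = R0 c a b + R0 c' a b"
  unfolding naive_curv_def by (simp add: D_add1 D_add2 br_add1 algebra_simps)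
lemma R0_add3: "R0 c a (b + b') = R0 c a b + R0 c a b'"
  unfolding naive_curv_def by (simp add: D_add1 D_add2 br_add1 algebra_simps)
lemma R0_minus2: "R0 c (- a) b = - R0 c a b"
  unfolding naive_curv_def by (simp add: D_minus1 D_minus2 br_minus2 algebra_simps)
lemma R0_minus3: "R0 c a (- b) = - R0 c a b"
  unfolding naive_curv_def by (simp add: D_minus1 D_minus2 algebra_simps)
lemma R0_zero2: "R0 c 0 b = 0"
  unfolding naive_curv_def by (simp add: br_zero2)
lemma R0_zero3: "R0 c a 0 = 0"
  unfolding naive_curv_def by simp
lemma R0_sm1: assumes "ip c a = 0" shows "R0 (sm f c) a b = sm f (R0 c a b)"
  unfolding naive_curv_def using assms
  by (simp add: D_sm1 D_leib br_leib1 D_diff1 sm_diff sm_add algebra_simps)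
lemma R0_pos: "G z = z \<Longrightarrow> G (R0 x y z) = R0 x y z"
  unfolding naive_curv_def by (simp add: G_diff mc1)
lemma R0_neg: "G z = - z \<Longrightarrow> G (R0 x y z) = - R0 x y z"
  unfolding naive_curv_def by (simp add: G_diff mc2)

end


context CA begin

definition tsum :: "nat \<Rightarrow> (nat \<Rightarrow> 'e) \<Rightarrow> (nat \<Rightarrow> 'e) \<Rightarrow> ('e \<Rightarrow> 'e) \<Rightarrow> 'r" where
  "tsum n e f \<phi> = (\<Sum>i<n. ip (f i) (\<phi> (e i)))"

lemma lin_addD: "lin sm \<phi> \<Longrightarrow> \<phi> (x + y) = \<phi> x + \<phi> y" unfolding lin_def by blast
lemma lin_smD: "lin sm \<phi> \<Longrightarrow> \<phi> (sm g x) = sm g (\<phi> x)" unfolding lin_def by blast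
lemma lin_zero: "lin sm \<phi> \<Longrightarrow> \<phi> 0 = 0" using lin_addD[of \<phi> 0 0] by simp
lemma lin_sum: "lin sm \<phi> \<Longrightarrow> \<phi> (sum h A) = (\<Sum>i\<in>A. \<phi> (h i))"
  by (induct A rule: infinite_finite_induct) (simp_all add: lin_zero lin_addD)

lemma frameD: "is_frame sm ip n e f \<Longrightarrow> x = (\<Sum>i<n. sm (ip (f i) x) (e i))"
  unfolding is_frame_def by blast

lemma frame_dual: assumes fr: "is_frame sm ip n e f" shows "y = (\<Sum>i<n. sm (ip y (e i)) (f i))"
proof (rule eq_by_ip[symmetric])
  fix x
  have "ip (\<Sum>i<n. sm (ip y (e i)) (f i)) x = (\<Sum>i<n. ip y (e i) * ip (f i) x)"
    by (simp add: ip_sum1 ip_sm)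
  also have "\<dots> = (\<Sum>i<n. ip y (sm (ip (f i) x) (e i)))" by (simp add: ip_sm2 mult.commute)
  also have "\<dots> = ip y (\<Sum>i<n. sm (ip (f i) x) (e i))" by (simp add: ip_sum2)
  also have "\<dots> = ip y x" using frameD[OF fr, of x] by simp
  finally show "ip (\<Sum>i<n. sm (ip y (e i)) (f i)) x = ip y x" .
qed

lemma trace_indep:
  assumes l: "lin sm \<phi>" and F: "is_frame sm ip n e f" and F': "is_frame sm ip m e' f'"
  shows "tsum n e f \<phi> = tsum m e' f' \<phi>"
proof -
  have "tsum n e f \<phi> = (\<Sum>i<n. ip (f i) (\<phi> (\<Sum>j<m. sm (ip (f' j) (e i)) (e' j))))"
    unfolding tsum_def using frameD[OF F'] by metis
  also have "\<dots> = (\<Sum>i<n. \<Sum>j<m. ip (f' j) (e i) * ip (f i) (\<phi> (e' j)))"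
    by (simp add: lin_sum[OF l] lin_smD[OF l] ip_sum2 ip_sm2)
  also have "\<dots> = (\<Sum>j<m. \<Sum>i<n. ip (f' j) (e i) * ip (f i) (\<phi> (e' j)))"
    by (rule sum.swap)
  also have "\<dots> = (\<Sum>j<m. ip (\<Sum>i<n. sm (ip (f' j) (e i)) (f i)) (\<phi> (e' j)))"
    by (simp add: ip_sum1 ip_sm)
  also have "\<dots> = (\<Sum>j<m. ip (f' j) (\<phi> (e' j)))"
    using frame_dual[OF F] by metis
  finally show ?thesis unfolding tsum_def .
qed

lemma trace_eq:
  assumes l: "lin sm \<phi>" and F: "is_frame sm ip n e f"
  shows "ca_trace sm ip \<phi> = tsum n e f \<phi>"
  unfolding ca_trace_def
proof (rule the_equality)
  show "\<forall>n' e' f'. is_frame sm ip n' e' f' \<longrightarrow> tsum n e f \<phi> = (\<Sum>i<n'. ip (f' i) (\<phi> (e' i)))"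
    using trace_indep[OF l F] unfolding tsum_def by blast
  fix t assume "\<forall>n e f. is_frame sm ip n e f \<longrightarrow> t = (\<Sum>i<n. ip (f i) (\<phi> (e i)))"
  then show "t = tsum n e f \<phi>" using F unfolding tsum_def by blast
qed

lemma lin_add: "lin sm \<phi> \<Longrightarrow> lin sm \<psi> \<Longrightarrow> lin sm (\<lambda>c. \<phi> c + \<psi> c)"
  unfolding lin_def by (simp add: sm_add algebra_simps)
lemma lin_neg: "lin sm \<phi> \<Longrightarrow> lin sm (\<lambda>c. - \<phi> c)"
  unfolding lin_def by (simp add: sm_minus algebra_simps)
lemma lin_zerof: "lin sm (\<lambda>c. 0)" unfolding lin_def by simp
lemma lin_gplus: "lin sm \<phi> \<Longrightarrow> lin sm (\<lambda>c. gplus G (\<phi> c))"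
  unfolding lin_def by (simp add: gplus_add gplus_sm)
lemma lin_gminus: "lin sm \<phi> \<Longrightarrow> lin sm (\<lambda>c. gminus G (\<phi> c))"
  unfolding lin_def by (simp add: gminus_add gminus_sm)
lemma lin_gplus_id: "lin sm (gplus G)"
  unfolding lin_def by (simp add: gplus_add gplus_sm)
lemma lin_gminus_id: "lin sm (gminus G)"
  unfolding lin_def by (simp add: gminus_add gminus_sm)

lemma trace_add: "lin sm \<phi> \<Longrightarrow> lin sm \<psi> \<Longrightarrow>
   ca_trace sm ip (\<lambda>c. \<phi> c + \<psi> c) = ca_trace sm ip \<phi> + ca_trace sm ip \<psi>"
proof -
  assume l: "lin sm \<phi>" "lin sm \<psi>"
  obtain n e f where F: "is_frame sm ip n e f" using frame_ex by blast
  show ?thesis using trace_eq[OF l(1) F] trace_eq[OF l(2) F] trace_eq[OF lin_add[OF l] F]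
    unfolding tsum_def by (simp add: ip_add2 sum.distrib)
qed

lemma trace_neg: "lin sm \<phi> \<Longrightarrow> ca_trace sm ip (\<lambda>c. - \<phi> c) = - ca_trace sm ip \<phi>"
proof -
  assume l: "lin sm \<phi>"
  obtain n e f where F: "is_frame sm ip n e f" using frame_ex by blast
  show ?thesis using trace_eq[OF l F] trace_eq[OF lin_neg[OF l] F]
    unfolding tsum_def by (simp add: ip_minus2 sum_negf)
qed

lemma trace_zerof: "ca_trace sm ip (\<lambda>c. 0) = 0"
proof -
  obtain n e f where F: "is_frame sm ip n e f" using frame_ex by blast
  show ?thesis using trace_eq[OF lin_zerof F] unfolding tsum_def by simp
qed

lemma trace_zero_gen:
  assumes l: "lin sm \<phi>" and lp: "lin sm p" and lq: "lin sm q"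
    and sa: "\<And>x y. ip x (p y) = ip (p x) y"
    and qp: "\<And>x. q (p x) = 0"
    and php: "\<And>x. \<phi> x = \<phi> (p x)"
    and qphi: "\<And>z x. ip z (\<phi> x) = ip (q z) (\<phi> x)"
  shows "ca_trace sm ip \<phi> = 0"
proof -
  obtain n e f where F: "is_frame sm ip n e f" using frame_ex by blast
  have "tsum n e f \<phi> = (\<Sum>i<n. ip (q (f i)) (\<phi> (p (e i))))"
    unfolding tsum_def using php qphi by metis
  also have "\<dots> = (\<Sum>i<n. ip (q (f i)) (\<phi> (\<Sum>j<n. sm (ip (f j) (p (e i))) (e j))))"
    using frameD[OF F] by metis
  also have "\<dots> = (\<Sum>i<n. \<Sum>j<n. ip (p (f j)) (e i) * ip (q (f i)) (\<phi> (e j)))"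
    by (simp add: lin_sum[OF l] lin_smD[OF l] ip_sum2 ip_sm2 sa)
  also have "\<dots> = (\<Sum>j<n. \<Sum>i<n. ip (p (f j)) (e i) * ip (q (f i)) (\<phi> (e j)))"
    by (rule sum.swap)
  also have "\<dots> = (\<Sum>j<n. ip (q (\<Sum>i<n. sm (ip (p (f j)) (e i)) (f i))) (\<phi> (e j)))"
    by (simp add: ip_sum1 ip_sm lin_sum[OF lq] lin_smD[OF lq])
  also have "\<dots> = (\<Sum>j<n. ip (q (p (f j))) (\<phi> (e j)))"
    using frame_dual[OF F] by metis
  also have "\<dots> = 0" by (simp add: qp)
  finally show ?thesis using trace_eq[OF l F] by simp
qed

end


context CA begin

lemma lin_R0p: "lin sm (\<lambda>c. R0 (gplus G c) (gminus G a) z)"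
  unfolding lin_def by (simp add: gplus_add R0_add1 gplus_sm R0_sm1 ip_pm)
lemma lin_R0m: "lin sm (\<lambda>c. R0 (gminus G c) (gplus G a) z)"
  unfolding lin_def by (simp add: gminus_add R0_add1 gminus_sm R0_sm1 ip_mp)

abbreviation "P a b \<equiv> ric_gf_plus sm ip br G D a b"
abbreviation "M a b \<equiv> ric_gf_minus sm ip br G D a b"
abbreviation "Ric a b \<equiv> total_ric sm ip br G D a b"

lemma P_def': "P a b = ca_trace sm ip (\<lambda>c. gplus G (R0 (gplus G c) (gminus G a) (gplus G b)))"
  unfolding ric_gf_plus_def trace_plus_def ..
lemma M_def': "M a b = ca_trace sm ip (\<lambda>c. gminus G (R0 (gminus G c) (gplus G a) (gminus G b)))"
  unfolding ric_gf_minus_def trace_minus_def ..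

lemma Ric_PM: "Ric a b = P a b + M a b"
proof -
  let ?p1 = "\<lambda>c. gplus G (R0 (gplus G c) (gminus G a) (gplus G b))"
  let ?p4 = "\<lambda>c. gminus G (R0 (gminus G c) (gplus G a) (gminus G b))"
  let ?p2 = "\<lambda>c. R0 (gplus G c) (gminus G a) (gminus G b)"
  let ?p3 = "\<lambda>c. R0 (gminus G c) (gplus G a) (gplus G b)"
  have l1: "lin sm ?p1" by (rule lin_gplus[OF lin_R0p])
  have l4: "lin sm ?p4" by (rule lin_gminus[OF lin_R0m])
  have l2: "lin sm ?p2" by (rule lin_R0p)
  have l3: "lin sm ?p3" by (rule lin_R0m)
  have pw: "total_curv br G D c a b = (?p1 c + ?p4 c) + (?p2 c + ?p3 c)" for c
  proof -
    have "total_curv br G D c a b = R0 (gplus G c) (gminus G a) (gplus G b + gminus G b)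
        + R0 (gminus G c) (gplus G a) (gplus G b + gminus G b)"
      unfolding total_curv_def using decomp[of b] by simp
    also have "\<dots> = (?p1 c + ?p4 c) + (?p2 c + ?p3 c)"
      by (simp add: R0_add3 gplus_fix[OF R0_pos[OF G_gplus]] gminus_fix[OF R0_neg[OF G_gminus]]
          algebra_simps)
    finally show ?thesis .
  qed
  have z2: "ca_trace sm ip ?p2 = 0"
    by (rule trace_zero_gen[OF l2 lin_gplus_id lin_gminus_id ip_gplus[symmetric] gminus_gplus _
          ip_neg_space[OF R0_neg[OF G_gminus]]]) (simp add: gplus_gplus)
  have z3: "ca_trace sm ip ?p3 = 0"
    by (rule trace_zero_gen[OF l3 lin_gminus_id lin_gplus_id ip_gminus[symmetric] gplus_gminus _
          ip_pos_space[OF R0_pos[OF G_gplus]]]) (simp add: gminus_gminus)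
  have "Ric a b = ca_trace sm ip (\<lambda>c. (?p1 c + ?p4 c) + (?p2 c + ?p3 c))"
    unfolding total_ric_def using pw by simp
  also have "\<dots> = ca_trace sm ip ?p1 + ca_trace sm ip ?p4 + (ca_trace sm ip ?p2 + ca_trace sm ip ?p3)"
    using trace_add[OF lin_add[OF l1 l4] lin_add[OF l2 l3]] trace_add[OF l1 l4] trace_add[OF l2 l3]
    by simp
  finally show ?thesis using z2 z3 by (simp add: P_def' M_def')
qed

lemma P_Gb: "P a (G b) = P a b" by (simp add: P_def' gplus_G)
lemma M_Ga: "M (G a) b = M a b" by (simp add: M_def' gplus_G)
lemma M_Gb: "M a (G b) = - M a b"
  using trace_neg[OF lin_gminus[OF lin_R0m], of a "gminus G b"]
  by (simp add: M_def' gminus_G R0_minus3 gminus_minus)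
lemma P_Ga: "P (G a) b = - P a b"
  using trace_neg[OF lin_gplus[OF lin_R0p], of a "gplus G b"]
  by (simp add: P_def' gminus_G R0_minus2 gplus_minus)

lemma P_proj: "P a b = P (gminus G a) (gplus G b)" by (simp add: P_def' gminus_gminus gplus_gplus)
lemma M_proj: "M a b = M (gplus G a) (gminus G b)" by (simp add: M_def' gminus_gminus gplus_gplus)
lemma gplus_zero: "gplus G 0 = 0" unfolding gplus_def by simp
lemma gminus_zero: "gminus G 0 = 0" unfolding gminus_def by simp
lemma P_z1: "P (gplus G a) b = 0" by (simp add: P_def' gminus_gplus R0_zero2 trace_zerof gplus_zero)
lemma P_z2: "P a (gminus G b) = 0" by (simp add: P_def' gplus_gminus R0_zero3 trace_zerof gplus_zero)
lemma M_z1: "M (gminus G a) b = 0" by (simp add: M_def' gplus_gminus R0_zero2 trace_zerof gminus_zero)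
lemma M_z2: "M a (gplus G b) = 0" by (simp add: M_def' gminus_gplus R0_zero3 trace_zerof gminus_zero)

end


theorem lemma4p4:
  fixes sm :: "'r::{comm_ring_1,real_algebra_1} \<Rightarrow> 'e::real_vector \<Rightarrow> 'e"
    and ip :: "'e \<Rightarrow> 'e \<Rightarrow> 'r"
    and anchor :: "'e \<Rightarrow> 'r \<Rightarrow> 'r"
    and br :: "'e \<Rightarrow> 'e \<Rightarrow> 'e"
    and G :: "'e \<Rightarrow> 'e"
    and dv :: "'e \<Rightarrow> 'r"
    and D :: "'e \<Rightarrow> 'e \<Rightarrow> 'e"
  assumes "courant_algebroid sm ip anchor br"
    and "generalized_metric sm ip G"
    and "divergence_operator sm anchor dv"
    and "generalized_connection sm ip anchor D"
    and "metric_connection G D"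
    and "has_divergence sm ip D dv"
    and "pure_type_torsion ip br G D"
  shows "(\<forall>a b. total_ric sm ip br G D a (G b) = - total_ric sm ip br G D (G a) b) \<and>
         ((\<forall>a b. ric_gf' sm ip br G D a b = - ric_gf' sm ip br G D b a) \<longleftrightarrow>
          (\<forall>a b. total_ric sm ip br G D a b = total_ric sm ip br G D b a))"
proof -
  interpret CA sm ip anchor br G D
    by (rule CA.intro) (use assms in auto)
  have rg: "ric_gf' sm ip br G D a b = ric_gf_plus sm ip br G D a b - ric_gf_minus sm ip br G D a b"
    for a b unfolding ric_gf'_def ..
  have part1: "\<forall>a b. total_ric sm ip br G D a (G b) = - total_ric sm ip br G D (G a) b"
    by (simp add: Ric_PM P_Gb M_Gb P_Ga M_Ga)
  have k1: "(\<forall>a b. ric_gf' sm ip br G D a b = - ric_gf' sm ip br G D b a) \<longleftrightarrow>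
      (\<forall>a b. ric_gf_plus sm ip br G D a b = ric_gf_minus sm ip br G D b a)"
  proof
    assume H: "\<forall>a b. ric_gf' sm ip br G D a b = - ric_gf' sm ip br G D b a"
    show "\<forall>a b. ric_gf_plus sm ip br G D a b = ric_gf_minus sm ip br G D b a"
    proof (intro allI)
      fix a b
      have "ric_gf' sm ip br G D (gminus G a) (gplus G b) = - ric_gf' sm ip br G D (gplus G b) (gminus G a)"
        using H by blast
      then show "ric_gf_plus sm ip br G D a b = ric_gf_minus sm ip br G D b a"
        using P_proj[of a b] M_proj[of b a] by (simp add: rg M_z1 P_z1)
    qed
  next
    assume H: "\<forall>a b. ric_gf_plus sm ip br G D a b = ric_gf_minus sm ip br G D b a"
    show "\<forall>a b. ric_gf' sm ip br G D a b = - ric_gf' sm ip br G D b a"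
      using H by (simp add: rg)
  qed
  have k2: "(\<forall>a b. total_ric sm ip br G D a b = total_ric sm ip br G D b a) \<longleftrightarrow>
      (\<forall>a b. ric_gf_plus sm ip br G D a b = ric_gf_minus sm ip br G D b a)"
  proof
    assume H: "\<forall>a b. total_ric sm ip br G D a b = total_ric sm ip br G D b a"
    show "\<forall>a b. ric_gf_plus sm ip br G D a b = ric_gf_minus sm ip br G D b a"
    proof (intro allI)
      fix a b
      have "total_ric sm ip br G D (gminus G a) (gplus G b) = total_ric sm ip br G D (gplus G b) (gminus G a)"
        using H by blast
      then show "ric_gf_plus sm ip br G D a b = ric_gf_minus sm ip br G D b a"
        using P_proj[of a b] M_proj[of b a] by (simp add: Ric_PM M_z1 P_z1)
    qed
  next
    assume H: "\<forall>a b. ric_gf_plus sm ip br G D a b = ric_gf_minus sm ip br G D b a"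
    show "\<forall>a b. total_ric sm ip br G D a b = total_ric sm ip br G D b a"
      using H by (simp add: Ric_PM add.commute)
  qed
  show ?thesis using part1 k1 k2 by blast
qed

end
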